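(* Let $U$ be a right strict binary search tree, let $x$ be a node that is the topmost node with its label, and suppose the right child $z$ of $x$ exists and is not the topmost node with its label. Then the label of $z$ is the least label occurring in $U$ that is strictly greater than the labels of all topmost nodes lying in the complete subtree at $x$.
   Context: A right strict binary search tree is a rooted binary tree (each node has a possibly empty left subtree and a possibly empty right subtree) whose nodes are labelled by elements of the totally ordered set $\{1<2<3<\cdots\}$ such that the label of each node is greater than or equal to the label of every node in its left subtree and strictly less than the label of every node in its right subtree. Labels may repeat. The complete subtree at a node $x$ consists of $x$ and all its descendants. All nodes with a given label $a$ are pairwise in ancestor–descendant relation, and the topmost node labelled $a$ is the node labelled $a$ that is an ancestor of all other nodes labelled $a$; a node is called topmost if it is the topmost node with its own label. *)

theory Defs
  imports "HOL-Library.Tree"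
begin

text \<open>Nodes of a binary tree are addressed by their path from the root.\<close>
datatype dir = Lft | Rgt

fun subtree_at :: "'a tree \<Rightarrow> dir list \<Rightarrow> 'a tree" where
  "subtree_at t [] = t"
| "subtree_at Leaf (d # ds) = Leaf"
| "subtree_at (Node l a r) (Lft # ds) = subtree_at l ds"
| "subtree_at (Node l a r) (Rgt # ds) = subtree_at r ds"

definition is_node :: "'a tree \<Rightarrow> dir list \<Rightarrow> bool" where
  "is_node t p \<longleftrightarrow> subtree_at t p \<noteq> Leaf"

definition label :: "'a tree \<Rightarrow> dir list \<Rightarrow> 'a" where
  "label t p = value (subtree_at t p)"

definition ancestor :: "dir list \<Rightarrow> dir list \<Rightarrow> bool" where
  "ancestor p q \<longleftrightarrow> (\<exists>s. q = p @ s)"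

fun right_strict_bst :: "nat tree \<Rightarrow> bool" where
  "right_strict_bst Leaf = True"
| "right_strict_bst (Node l a r) \<longleftrightarrow>
     right_strict_bst l \<and> right_strict_bst r \<and> 1 \<le> a \<and>
     (\<forall>b\<in>set_tree l. b \<le> a) \<and> (\<forall>b\<in>set_tree r. a < b)"

definition topmost :: "'a tree \<Rightarrow> dir list \<Rightarrow> bool" where
  "topmost t p \<longleftrightarrow> is_node t p \<and>
     (\<forall>q. is_node t q \<and> label t q = label t p \<longrightarrow> ancestor p q)"

end

theory Submission
  imports Defs
begin

lemma val_in: "subtree_at t s \<noteq> Leaf \<Longrightarrow> value (subtree_at t s) \<in> set_tree t"
proof (induction s arbitrary: t)
  case Nil then show ?case by (cases t) auto
next
  case (Cons d s) then show ?case by (cases t; cases d) auto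
qed

lemma node_prefix: "subtree_at t (p@q) \<noteq> Leaf \<Longrightarrow> subtree_at t p \<noteq> Leaf"
proof (induction p arbitrary: t)
  case Nil then show ?case by (cases t; cases q) auto
next
  case (Cons d p) then show ?case by (cases t; cases d) auto
qed

lemma lftD: "right_strict_bst t \<Longrightarrow> is_node t (p@Lft#s) \<Longrightarrow> label t (p@Lft#s) \<le> label t p"
proof (induction p arbitrary: t)
  case Nil then show ?case
    by (cases t) (auto simp: is_node_def label_def dest: val_in)
next
  case (Cons d p) then show ?case
    by (cases t; cases d) (auto simp: is_node_def label_def)
qed

lemma rgtD: "right_strict_bst t \<Longrightarrow> is_node t (p@Rgt#s) \<Longrightarrow> label t p < label t (p@Rgt#s)"
proof (induction p arbitrary: t)
  case Nil then show ?case
    by (cases t) (auto simp: is_node_def label_def dest: val_in)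
next
  case (Cons d p) then show ?case
    by (cases t; cases d) (auto simp: is_node_def label_def)
qed

lemma is_node_prefix: "is_node t (p@q) \<Longrightarrow> is_node t p"
  unfolding is_node_def by (rule node_prefix)

lemma diverge: "ancestor p q \<or> ancestor q p \<or> (\<exists>r s1 s2. p = r@Lft#s1 \<and> q = r@Rgt#s2)
   \<or> (\<exists>r s1 s2. p = r@Rgt#s1 \<and> q = r@Lft#s2)"
proof (induction p arbitrary: q)
  case Nil then show ?case by (simp add: ancestor_def)
next
  case (Cons d p)
  show ?case
  proof (cases q)
    case Nil then show ?thesis by (simp add: ancestor_def)
  next
    case (Cons e q')
    show ?thesis
    proof (cases "d = e")
      case True
      from Cons.IH[of q'] show ?thesis
      proof (elim disjE exE conjE)
        assume "ancestor p q'" then show ?thesis using Cons True by (auto simp: ancestor_def)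
      next
        assume "ancestor q' p" then show ?thesis using Cons True by (auto simp: ancestor_def)
      next
        fix r s1 s2 assume "p = r @ Lft # s1" "q' = r @ Rgt # s2"
        then show ?thesis using Cons True by (metis append_Cons)
      next
        fix r s1 s2 assume "p = r @ Rgt # s1" "q' = r @ Lft # s2"
        then show ?thesis using Cons True by (metis append_Cons)
      qed
    next
      case False
      then show ?thesis using Cons by (cases d; cases e) (metis append_Nil)+
    qed
  qed
qed

lemma comparable:
  assumes "right_strict_bst t" "is_node t p" "is_node t q" "label t p = label t q"
  shows "ancestor p q \<or> ancestor q p"
proof -
  have "\<not> (\<exists>r s1 s2. p = r@Lft#s1 \<and> q = r@Rgt#s2)"
    using assms lftD rgtD by (metis leD)
  moreover have "\<not> (\<exists>r s1 s2. p = r@Rgt#s1 \<and> q = r@Lft#s2)"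
    using assms lftD rgtD by (metis leD)
  ultimately show ?thesis using diverge[of p q] by blast
qed

lemma in_set_node: "b \<in> set_tree t \<Longrightarrow> \<exists>p. is_node t p \<and> label t p = b"
proof (induction t)
  case Leaf then show ?case by simp
next
  case (Node l a r)
  consider "b = a" | "b \<in> set_tree l" | "b \<in> set_tree r" using Node.prems by auto
  then show ?case
  proof cases
    case 1 then show ?thesis
      by (intro exI[of _ "[]"]) (simp add: is_node_def label_def)
  next
    case 2 then obtain p where "is_node l p" "label l p = b" using Node.IH by blast
    then show ?thesis
      by (intro exI[of _ "Lft#p"]) (simp add: is_node_def label_def)
  next
    case 3 then obtain p where "is_node r p" "label r p = b" using Node.IH by blast
    then show ?thesis
      by (intro exI[of _ "Rgt#p"]) (simp add: is_node_def label_def)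
  qed
qed

lemma exists_topmost:
  assumes "right_strict_bst t" "b \<in> set_tree t"
  shows "\<exists>w. topmost t w \<and> label t w = b"
proof -
  let ?S = "{p. is_node t p \<and> label t p = b}"
  have ne: "?S \<noteq> {}" using in_set_node[OF assms(2)] by auto
  obtain w where w: "w \<in> ?S" "\<forall>p\<in>?S. length w \<le> length p"
    using ex_has_least_nat[of "\<lambda>p. p \<in> ?S" _ length] ne by blast
  have "topmost t w"
    unfolding topmost_def
  proof (intro conjI allI impI)
    show "is_node t w" using w by simp
    fix q assume q: "is_node t q \<and> label t q = label t w"
    then have "ancestor w q \<or> ancestor q w" using comparable[OF assms(1)] w by auto
    moreover have "length w \<le> length q" using w q by auto
    ultimately show "ancestor w q" by (auto simp: ancestor_def)
  qed
  then show ?thesis using w by auto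
qed

theorem mainTheorem20:
  fixes U :: "nat tree" and x :: "dir list"
  assumes "right_strict_bst U"
    and "topmost U x"
    and "is_node U (x @ [Rgt])"
    and "\<not> topmost U (x @ [Rgt])"
  shows "label U (x @ [Rgt]) \<in> set_tree U
       \<and> (\<forall>q. ancestor x q \<and> topmost U q \<longrightarrow> label U q < label U (x @ [Rgt]))
       \<and> (\<forall>b\<in>set_tree U. (\<forall>q. ancestor x q \<and> topmost U q \<longrightarrow> label U q < b)
              \<longrightarrow> label U (x @ [Rgt]) \<le> b)"
proof -
  note bst = assms(1)
  define c where "c = label U (x @ [Rgt])"
  have c_in: "c \<in> set_tree U" using assms(3) val_in unfolding c_def is_node_def label_def by blast
  have xz: "label U x < c" using rgtD[OF bst, of x "[]"] assms(3) unfolding c_def by simp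
  obtain q where q: "is_node U q" "label U q = c" "\<not> ancestor (x@[Rgt]) q"
    using assms(3,4) unfolding topmost_def c_def by blast
  have "ancestor q (x@[Rgt])" using comparable[OF bst q(1) assms(3)] q unfolding c_def by auto
  then obtain s0 where s0: "x @ [Rgt] = q @ s0" by (auto simp: ancestor_def)
  have "s0 \<noteq> []" using s0 q(3) by (auto simp: ancestor_def)
  then obtain s1 where s1: "x = q @ s1" using s0
    by (metis append_butlast_last_id butlast_append butlast_snoc)
  have "s1 \<noteq> []" using s1 xz q(2) by auto
  then obtain d s where ds: "s1 = d # s" by (cases s1) auto
  have xnode: "is_node U x" using assms(3) is_node_prefix by blast
  have "d = Lft"
  proof (rule ccontr)
    assume "d \<noteq> Lft" then have "d = Rgt" by (cases d) auto
    then have "label U q < label U x" using rgtD[OF bst, of q s] xnode s1 ds by simp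
    then show False using xz q(2) by simp
  qed
  then have xq: "x = q @ Lft # s" using s1 ds by simp
  have below: "label U (x @ t) \<le> c" if "is_node U (x @ t)" for t
    using lftD[OF bst, of q "s @ t"] that xq q(2) by simp
  have P2: "\<forall>q'. ancestor x q' \<and> topmost U q' \<longrightarrow> label U q' < c"
  proof (intro allI impI)
    fix q' assume a: "ancestor x q' \<and> topmost U q'"
    then obtain t where t: "q' = x @ t" by (auto simp: ancestor_def)
    have n: "is_node U q'" using a by (simp add: topmost_def)
    have le: "label U q' \<le> c" using below n t by simp
    show "label U q' < c"
    proof (rule ccontr)
      assume "\<not> label U q' < c"
      then have "label U q' = c" using le by simp
      then have "ancestor q' q" using a q unfolding topmost_def by auto
      then have "length q' \<le> length q" by (auto simp: ancestor_def)
      then show False using t xq by simp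
    qed
  qed
  have P3: "\<forall>b\<in>set_tree U. (\<forall>q. ancestor x q \<and> topmost U q \<longrightarrow> label U q < b) \<longrightarrow> c \<le> b"
  proof (intro ballI impI)
    fix b assume b: "b \<in> set_tree U" and H: "\<forall>q. ancestor x q \<and> topmost U q \<longrightarrow> label U q < b"
    show "c \<le> b"
    proof (rule ccontr)
      assume "\<not> c \<le> b" then have bc: "b < c" by simp
      obtain w where w: "topmost U w" "label U w = b" using exists_topmost[OF bst b] by blast
      have wn: "is_node U w" using w by (simp add: topmost_def)
      have xb: "label U x < b" using H assms(2) by (auto simp: ancestor_def)
      have zn: "is_node U (x @ [Rgt])" by fact
      from diverge[of w x] show False
      proof (elim disjE exE conjE)
        assume "ancestor x w" then show False using H w by auto
      next
        assume "ancestor w x"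
        then obtain t where t: "x = w @ t" by (auto simp: ancestor_def)
        have "t \<noteq> []" using t xb w by auto
        then obtain e t' where et: "t = e # t'" by (cases t) auto
        show False
        proof (cases e)
          case Lft
          have "label U (w @ Lft # (t' @ [Rgt])) \<le> label U w"
            using lftD[OF bst] zn t et Lft by (metis append_Cons append_assoc)
          then show False using t et Lft bc w unfolding c_def by simp
        next
          case Rgt
          have "label U w < label U (w @ Rgt # t')"
            using rgtD[OF bst] xnode t et Rgt by metis
          then show False using t et Rgt xb w by simp
        qed
      next
        fix r s1 s2 assume "w = r @ Lft # s1" "x = r @ Rgt # s2"
        then have "label U w < label U x" using lftD[OF bst] rgtD[OF bst] wn xnode
          by (metis le_less_trans)
        then show False using xb w by simp
      next
        fix r s1 s2 assume h: "w = r @ Rgt # s1" "x = r @ Lft # s2"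
        have "label U (r @ Lft # (s2 @ [Rgt])) \<le> label U r"
          using lftD[OF bst] zn h by (metis append_Cons append_assoc)
        moreover have "label U r < label U w" using rgtD[OF bst] wn h by metis
        ultimately show False using h bc w unfolding c_def by simp
      qed
    qed
  qed
  show ?thesis using c_in P2 P3 unfolding c_def by blast
qed

end
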